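(* Let $R$ be a commutative ring with identity whose set of zero-divisors $Z_R$ satisfies $Z_R\ne\{0\}$, let $n>1$, and let $r$ be the radius of the orthogonality graph $O(M_n(R))$. Then: (1) $2\le r\le 4$; (2) if $$\forall a_0\in Z_R\ \ \exists a_1,a_2\in R\setminus\{0\}\ \ \forall i,j\in\{0,1,2\},\ i\ne j:\ a_ia_j=0,$$ then $r\in\{2,3\}$; (3) $r=2$ if and only if there exists $c\in R\setminus\{0\}$ such that $\operatorname{Ann}(c)\cap\operatorname{Ann}(a)\ne 0$ for every $a\in Z_R$.
   Context: All rings are associative with identity. For a commutative ring $R$, $Z_R$ is the set of zero-divisors (including $0$) and $\operatorname{Ann}(a)=\{x\in R: ax=0\}$. The orthogonality graph $O(S)$ of a ring $S$ is the undirected graph whose vertices are the nonzero two-sided zero-divisors of $S$ (elements $x$ with $xy=0$ and $zx=0$ for some nonzero $y,z$), distinct vertices $x,y$ being adjacent iff $xy=yx=0$. $d(x,y)$ is graph distance, the eccentricity of a vertex $v$ is $\sup_w d(v,w)$ over all vertices $w$, and the radius is the minimum eccentricity over all vertices. *)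

theory Defs
  imports "HOL-Analysis.Analysis" "HOL-Library.Extended_Nat"
begin

text \<open>Zero-divisors (including 0) and annihilators in a commutative ring.\<close>
definition zero_divisors :: "'a::comm_ring_1 set" where
  "zero_divisors = {a. \<exists>b. b \<noteq> 0 \<and> a * b = 0}"

definition Ann :: "'a::comm_ring_1 \<Rightarrow> 'a set" where
  "Ann a = {x. a * x = 0}"

definition orth_vertices :: "(('a::comm_ring_1)^('n::finite)^'n) set" where
  "orth_vertices = {x. x \<noteq> 0 \<and> (\<exists>y::'a^'n^'n. y \<noteq> 0 \<and> x ** y = 0) \<and> (\<exists>z::'a^'n^'n. z \<noteq> 0 \<and> z ** x = 0)}"

definition orth_adj :: "('a::comm_ring_1)^('n::finite)^'n \<Rightarrow> 'a^'n^'n \<Rightarrow> bool" where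
  "orth_adj x y \<longleftrightarrow> x \<in> orth_vertices \<and> y \<in> orth_vertices \<and> x \<noteq> y \<and> x ** y = 0 \<and> y ** x = 0"

definition orth_walk :: "('a::comm_ring_1)^('n::finite)^'n \<Rightarrow> 'a^'n^'n \<Rightarrow> nat \<Rightarrow> bool" where
  "orth_walk x y k \<longleftrightarrow> x \<in> orth_vertices \<and>
     (\<exists>p. p 0 = x \<and> p k = y \<and> (\<forall>i<k. orth_adj (p i) (p (Suc i))))"

definition orth_dist :: "('a::comm_ring_1)^('n::finite)^'n \<Rightarrow> 'a^'n^'n \<Rightarrow> enat" where
  "orth_dist x y = (if \<exists>k. orth_walk x y k then enat (LEAST k. orth_walk x y k) else \<infinity>)"

definition orth_ecc :: "('a::comm_ring_1)^('n::finite)^'n \<Rightarrow> enat" where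
  "orth_ecc v = (SUP w\<in>orth_vertices. orth_dist v w)"

definition orth_radius :: "('a::comm_ring_1) itself \<Rightarrow> 'n::finite itself \<Rightarrow> enat" where
  "orth_radius _ _ = (INF v\<in>(orth_vertices :: ('a^'n^'n) set). orth_ecc v)"

end

theory Submission
  imports Defs
begin


definition ev :: "'n::finite \<Rightarrow> 'a::comm_ring_1^'n" where
  "ev j = (\<chi> k. if k = j then 1 else 0)"

definition rowupd :: "'a::comm_ring_1^'n::finite^'n \<Rightarrow> 'n \<Rightarrow> 'a^'n \<Rightarrow> 'a^'n^'n" where
  "rowupd M l v = (\<chi> i. if i = l then v else M$i)"

definition adj0 :: "'a::comm_ring_1^'n::finite^'n \<Rightarrow> 'a^'n^'n" where
  "adj0 M = (\<chi> j l. det (rowupd M l (ev j)))"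

lemma tr_nth: "transpose A $ i $ j = A $ j $ i"
  by (simp add: transpose_def)

lemma sum_ev: "(\<Sum>j\<in>UNIV. v$j *s (ev j :: 'a::comm_ring_1^'n::finite)) = v"
proof -
  have "\<And>i. (\<Sum>x\<in>UNIV. v $ x * (if i = x then 1 else 0)) = (\<Sum>x\<in>UNIV. if x = i then v$x else (0::'a))"
    by (rule sum.cong) auto
  then show ?thesis by (simp add: vec_eq_iff sum_component ev_def)
qed

lemma L1: "(\<Sum>j\<in>UNIV. v$j * det (rowupd M l (ev j))) = det (rowupd (M::'a::comm_ring_1^'n::finite^'n) l v)"
proof -
  have "det (rowupd M l v) = det (\<chi> i. if i = l then (\<Sum>j\<in>UNIV. v$j *s (ev j :: 'a^'n)) else M$i)"
    unfolding sum_ev rowupd_def ..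
  also have "\<dots> = (\<Sum>j\<in>UNIV. det (\<chi> i. if i = l then v$j *s (ev j :: 'a^'n) else M$i))"
    by (rule det_linear_row_sum) simp
  also have "\<dots> = (\<Sum>j\<in>UNIV. v$j * det (rowupd M l (ev j)))"
    unfolding rowupd_def
    by (rule sum.cong[OF refl], rule det_row_mul[of l "v$_" "\<lambda>_. ev _" "\<lambda>i. M$i"])
  finally show ?thesis by simp
qed

lemma cof_sym:
  "det (rowupd M l (ev j)) = det (transpose (rowupd (transpose (M::'a::comm_ring_1^'n::finite^'n)) j (ev l)))"
  unfolding det_def
proof (rule sum.cong[OF refl])
  fix p assume "p \<in> {p. p permutes (UNIV::'n set)}"
  then have p: "p permutes (UNIV::'n set)" by simp
  show "of_int (sign p) * (\<Prod>i\<in>UNIV. rowupd M l (ev j) $ i $ p i) =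
        of_int (sign p) * (\<Prod>i\<in>UNIV. transpose (rowupd (transpose M) j (ev l)) $ i $ p i)"
  proof (cases "p l = j")
    case True
    have "\<And>i. p i = j \<longleftrightarrow> i = l" using True permutes_inj[OF p] by (metis injD)
    then show ?thesis
      by (intro arg_cong[where f="\<lambda>x. _ * x"] prod.cong)
         (auto simp: rowupd_def transpose_def ev_def True)
  next
    case False
    obtain i0 where i0: "p i0 = j" using permutes_surj[OF p] by (metis surjD)
    with False have "i0 \<noteq> l" by auto
    have a: "(\<Prod>i\<in>UNIV. rowupd M l (ev j) $ i $ p i) = 0"
      by (rule prod_zero) (use False in \<open>auto simp: rowupd_def ev_def intro!: bexI[of _ l]\<close>)
    have b: "(\<Prod>i\<in>UNIV. transpose (rowupd (transpose M) j (ev l)) $ i $ p i) = 0"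
      by (rule prod_zero) (use i0 \<open>i0 \<noteq> l\<close> in \<open>auto simp: rowupd_def ev_def transpose_def intro!: bexI[of _ i0]\<close>)
    show ?thesis by (simp add: a b)
  qed
qed

lemma A1: "(M ** adj0 M) $ i $ l = (if i = l then det M else 0)"
proof -
  have "(M ** adj0 M) $ i $ l = (\<Sum>j\<in>UNIV. M$i$j * det (rowupd M l (ev j)))"
    by (simp add: matrix_matrix_mult_def adj0_def)
  also have "\<dots> = det (rowupd M l (M$i))" by (rule L1)
  also have "\<dots> = (if i = l then det M else 0)"
  proof (cases "i = l")
    case True
    then have "rowupd M l (M$i) = M" by (simp add: rowupd_def vec_eq_iff)
    then show ?thesis using True by simp
  next
    case False
    have "row i (rowupd M l (M$i)) = row l (rowupd M l (M$i))"
      using False by (simp add: row_def rowupd_def vec_eq_iff)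
    then show ?thesis using False det_identical_rows[OF False] by simp
  qed
  finally show ?thesis .
qed

lemma A2: "(adj0 M ** M) $ j $ m = (if j = m then det M else 0)"
proof -
  let ?Mt = "transpose M"
  have "(adj0 M ** M) $ j $ m = (\<Sum>l\<in>UNIV. M$l$m * det (rowupd M l (ev j)))"
    by (simp add: matrix_matrix_mult_def adj0_def mult.commute)
  also have "\<dots> = (\<Sum>l\<in>UNIV. ?Mt$m$l * det (rowupd ?Mt j (ev l)))"
    by (rule sum.cong[OF refl]) (subst cof_sym, simp only: det_transpose tr_nth)
  also have "\<dots> = det (rowupd ?Mt j (?Mt$m))" by (rule L1)
  also have "\<dots> = (if j = m then det M else 0)"
  proof (cases "j = m")
    case True
    then have "rowupd ?Mt j (?Mt$m) = ?Mt" by (simp add: rowupd_def vec_eq_iff)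
    then show ?thesis using True by simp
  next
    case False
    have "row m (rowupd ?Mt j (?Mt$m)) = row j (rowupd ?Mt j (?Mt$m))"
      using False by (simp add: row_def rowupd_def vec_eq_iff)
    then show ?thesis using False det_identical_rows[of m j] by auto
  qed
  finally show ?thesis .
qed

definition repl :: "'a::comm_ring_1^'n::finite^'n \<Rightarrow> 'n set \<Rightarrow> ('n \<Rightarrow> 'n) \<Rightarrow> 'a^'n^'n" where
  "repl W T g = (\<chi> i. if i \<in> T then ev (g i) else W$i)"

lemma nat_step: "P 0 \<Longrightarrow> \<not> P N \<Longrightarrow> \<exists>m<N. P m \<and> \<not> P (Suc m)"
proof (induction N)
  case 0 then show ?case by simp
next
  case (Suc N)
  then show ?case by (cases "P N") (auto intro: less_SucI)
qed

lemma GL: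
  fixes W :: "'a::comm_ring_1^'n::finite^'n"
  assumes t0: "t0 \<noteq> 0" "b * t0 = 0" "t0 * det W = 0"
  shows "\<exists>U. U \<noteq> 0 \<and> W ** U = 0 \<and> U ** W = 0 \<and> (\<forall>i j. b * U$i$j = 0)"
proof -
  define good where "good m \<longleftrightarrow> (\<exists>t. t \<noteq> 0 \<and> b * t = 0 \<and> (\<forall>T g. card T = m \<longrightarrow> t * det (repl W T g) = 0))" for m
  have "good 0"
  proof -
    have "\<And>T g. card T = 0 \<Longrightarrow> repl W T g = W"
      by (simp add: repl_def)
    then show ?thesis unfolding good_def using t0 by (intro exI[of _ t0]) auto
  qed
  moreover have "\<not> good CARD('n)"
  proof
    assume "good CARD('n)"
    then obtain t where t: "t \<noteq> 0" and h: "\<forall>T g. card T = CARD('n) \<longrightarrow> t * det (repl W T g) = 0"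
      unfolding good_def by blast
    have "repl W UNIV id = mat 1" by (simp add: repl_def ev_def mat_def vec_eq_iff)
    then have "t * det (repl W UNIV id) = t" by simp
    with h t show False by (metis card_UNIV)
  qed
  ultimately obtain m where "m < CARD('n)" "good m" "\<not> good (Suc m)"
    using nat_step[of good "CARD('n)"] by blast
  then obtain t where t: "t \<noteq> 0" "b * t = 0" and kill: "\<And>T g. card T = m \<Longrightarrow> t * det (repl W T g) = 0"
    unfolding good_def by blast
  from \<open>\<not> good (Suc m)\<close> t obtain T0 g0 where T0: "card T0 = Suc m" "t * det (repl W T0 g0) \<noteq> 0"
    unfolding good_def by blast
  then obtain p where p: "p \<in> T0" by fastforce
  define T1 where "T1 = T0 - {p}"
  have cT1: "card T1 = m" using T0 p by (simp add: T1_def)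
  have pT1: "p \<notin> T1" by (simp add: T1_def)
  define M where "M = repl W T1 g0"
  define U where "U = (\<chi> j l. t * adj0 M $ j $ l)"
  have rep: "\<And>l j. rowupd M l (ev j) = repl W (insert l T1) (g0(l := j))"
    by (auto simp: rowupd_def M_def repl_def vec_eq_iff)
  have Ujl: "\<And>j l. U $ j $ l = t * det (repl W (insert l T1) (g0(l := j)))"
    by (simp add: U_def adj0_def rep)
  have zc: "\<And>j l. l \<in> T1 \<Longrightarrow> U $ j $ l = 0"
  proof -
    fix j l assume "l \<in> T1"
    then have "card (insert l T1) = m" using cT1 by (simp add: insert_absorb)
    then show "U $ j $ l = 0" using kill by (simp add: Ujl)
  qed
  have "insert p T1 = T0" using p by (auto simp: T1_def)
  then have "U $ (g0 p) $ p \<noteq> 0" using T0 by (simp add: Ujl)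
  then have Unz: "U \<noteq> 0" by auto
  have dM: "t * det M = 0" using kill cT1 by (simp add: M_def)
  have MW: "\<And>i. i \<notin> T1 \<Longrightarrow> M $ i = W $ i" by (simp add: M_def repl_def)
  have UW: "U ** W = 0"
  proof -
    have "(U ** W) $ j $ k = 0" for j k
    proof -
      have "(U ** W) $ j $ k = (\<Sum>l\<in>UNIV. U$j$l * W$l$k)"
        by (simp add: matrix_matrix_mult_def)
      also have "\<dots> = (\<Sum>l\<in>UNIV. U$j$l * M$l$k)"
        by (rule sum.cong[OF refl]) (metis MW mult_zero_left zc)
      also have "\<dots> = t * (adj0 M ** M) $ j $ k"
        by (simp add: matrix_matrix_mult_def U_def sum_distrib_left mult.assoc)
      also have "\<dots> = 0" using dM by (simp add: A2)
      finally show ?thesis .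
    qed
    then show ?thesis by (simp add: vec_eq_iff)
  qed
  have WU: "W ** U = 0"
  proof -
    have "(W ** U) $ i $ l = 0" for i l
    proof (cases "i \<in> T1")
      case False
      have "(W ** U) $ i $ l = (\<Sum>j\<in>UNIV. M$i$j * U$j$l)"
        by (simp add: matrix_matrix_mult_def MW[OF False])
      also have "\<dots> = t * (M ** adj0 M) $ i $ l"
        by (simp add: matrix_matrix_mult_def U_def sum_distrib_left mult.assoc mult.left_commute)
      also have "\<dots> = 0" using dM by (simp add: A1)
      finally show ?thesis .
    next
      case iT: True
      show ?thesis
      proof (cases "l \<in> T1")
        case True
        then show ?thesis by (simp add: matrix_matrix_mult_def zc)
      next
        case lT: False
        have il: "i \<noteq> l" using iT lT by auto
        have "(W ** U) $ i $ l = t * (\<Sum>j\<in>UNIV. W$i$j * det (rowupd M l (ev j)))"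
          by (simp add: matrix_matrix_mult_def U_def adj0_def sum_distrib_left mult.left_commute)
        also have "\<dots> = t * det (rowupd M l (W$i))" by (simp add: L1)
        also have "\<dots> = 0"
        proof -
          define N where "N = repl W (insert l (T1 - {i})) (g0(l := g0 i))"
          have "0 < m" using cT1 iT card_gt_0_iff[of T1] by auto
          then have cN: "card (insert l (T1 - {i})) = m" using cT1 iT lT
            by (simp add: card_Diff_singleton)
          have eq: "rowupd M l (W$i) = (\<chi> r. N $ (Transposition.transpose i l r))"
            using il iT lT by (auto simp: vec_eq_iff rowupd_def N_def M_def repl_def Transposition.transpose_def)
          have "det (rowupd M l (W$i)) = - det N"
            unfolding eq by (simp add: det_permute_rows permutes_swap_id sign_swap_id il)
          then show ?thesis using kill[OF cN] by (simp add: N_def)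
        qed
        finally show ?thesis .
      qed
    qed
    then show ?thesis by (simp add: vec_eq_iff)
  qed
  have "\<forall>i j. b * U$i$j = 0" using t by (simp add: U_def mult.assoc[symmetric])
  with Unz UW WU show ?thesis by blast
qed



lemma vert_of_ann:
  fixes x y :: "'a::comm_ring_1^'n::finite^'n"
  assumes "x \<noteq> 0" "y \<noteq> 0" "x ** y = 0" "y ** x = 0"
  shows "x \<in> orth_vertices" "y \<in> orth_vertices"
  using assms unfolding orth_vertices_def by blast+

lemma walk0: "x \<in> orth_vertices \<Longrightarrow> orth_walk x x 0"
  unfolding orth_walk_def by (intro conjI exI[of _ "\<lambda>_. x"]) auto

lemma walk1: "orth_adj x y \<Longrightarrow> orth_walk x y 1"
  unfolding orth_walk_def
  by (intro conjI exI[of _ "\<lambda>i. if i = 0 then x else y"]) (auto simp: orth_adj_def)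

lemma walk_cat:
  assumes "orth_walk x y k" "orth_walk y z l"
  shows "orth_walk x z (k + l)"
proof -
  from assms(1) obtain p where p: "x \<in> orth_vertices" "p 0 = x" "p k = y" "\<forall>i<k. orth_adj (p i) (p (Suc i))"
    unfolding orth_walk_def by blast
  from assms(2) obtain q where q: "q 0 = y" "q l = z" "\<forall>i<l. orth_adj (q i) (q (Suc i))"
    unfolding orth_walk_def by blast
  define r where "r i = (if i \<le> k then p i else q (i - k))" for i
  have "\<forall>i<k+l. orth_adj (r i) (r (Suc i))"
  proof (intro allI impI)
    fix i assume i: "i < k + l"
    show "orth_adj (r i) (r (Suc i))"
    proof (cases "i < k")
      case True then show ?thesis using p(4) by (simp add: r_def)
    next
      case False
      then have "r i = q (i - k)" using p(3) q(1) by (auto simp: r_def)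
      moreover have "r (Suc i) = q (Suc (i - k))" using False by (simp add: r_def Suc_diff_le)
      ultimately show ?thesis using q(3) i False by simp
    qed
  qed
  moreover have "r 0 = x" "r (k + l) = z" using p q by (auto simp: r_def)
  ultimately show ?thesis using p(1) unfolding orth_walk_def by blast
qed

lemma walk_step:
  fixes x y :: "'a::comm_ring_1^'n::finite^'n"
  assumes "x \<noteq> 0" "y \<noteq> 0" "x ** y = 0" "y ** x = 0"
  shows "\<exists>k\<le>1. orth_walk x y k"
proof (cases "x = y")
  case True then show ?thesis using vert_of_ann[OF assms] walk0 by blast
next
  case False
  then have "orth_adj x y" using vert_of_ann[OF assms] assms by (simp add: orth_adj_def)
  then show ?thesis using walk1 by blast
qed

lemma walk_cat_le:
  assumes "\<exists>k\<le>a. orth_walk x y k" "\<exists>k\<le>b. orth_walk y z k"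
  shows "\<exists>k\<le>a+b. orth_walk x z k"
proof -
  obtain k1 where "k1 \<le> a" "orth_walk x y k1" using assms(1) by blast
  moreover obtain k2 where "k2 \<le> b" "orth_walk y z k2" using assms(2) by blast
  ultimately have "k1 + k2 \<le> a + b" "orth_walk x z (k1 + k2)" using walk_cat by auto
  then show ?thesis by blast
qed

lemma dist_le:
  assumes "\<exists>k\<le>K. orth_walk x y k"
  shows "orth_dist x y \<le> enat K"
proof -
  obtain k where k: "k \<le> K" "orth_walk x y k" using assms by blast
  then have "(LEAST k. orth_walk x y k) \<le> k" by (rule_tac Least_le) 
  then show ?thesis using k unfolding orth_dist_def by auto
qed

lemma dist_ge:
  assumes "\<forall>k<K. \<not> orth_walk x y k"
  shows "enat K \<le> orth_dist x y"
proof (cases "\<exists>k. orth_walk x y k")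
  case True
  then have "orth_walk x y (LEAST k. orth_walk x y k)" by (rule LeastI_ex)
  then have "K \<le> (LEAST k. orth_walk x y k)" using assms by (meson not_le)
  then show ?thesis using True unfolding orth_dist_def by simp
next
  case False
  then have "orth_dist x y = \<infinity>" unfolding orth_dist_def by simp
  then show ?thesis by simp
qed

lemma walk_0D: "orth_walk x y 0 \<Longrightarrow> x = y"
  unfolding orth_walk_def by auto

lemma walk_1D: "orth_walk x y (Suc 0) \<Longrightarrow> orth_adj x y"
  unfolding orth_walk_def by auto

lemma walk_2D: "orth_walk x y 2 \<Longrightarrow> \<exists>u. orth_adj x u \<and> orth_adj u y"
  unfolding orth_walk_def
proof (elim conjE exE)
  fix p assume "p 0 = x" "p 2 = y" "\<forall>i<2. orth_adj (p i) (p (Suc i))"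
  then show "\<exists>u. orth_adj x u \<and> orth_adj u y"
  proof (intro exI[of _ "p 1"] conjI)
    show "orth_adj x (p 1)" using \<open>p 0 = x\<close> \<open>\<forall>i<2. _\<close> by (metis One_nat_def zero_less_numeral)
    show "orth_adj (p 1) y" using \<open>p 2 = y\<close> \<open>\<forall>i<2. _\<close> by (metis One_nat_def Suc_1 lessI)
  qed
qed

lemma ecc_le: "(\<And>w. w \<in> orth_vertices \<Longrightarrow> orth_dist v w \<le> K) \<Longrightarrow> orth_ecc v \<le> K"
  unfolding orth_ecc_def by (rule SUP_least)

lemma ecc_ge: "w \<in> orth_vertices \<Longrightarrow> K \<le> orth_dist v w \<Longrightarrow> K \<le> orth_ecc v"
  unfolding orth_ecc_def by (rule SUP_upper2)

definition emat :: "'n::finite \<Rightarrow> 'n \<Rightarrow> 'a::comm_ring_1 \<Rightarrow> 'a^'n^'n" where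
  "emat k l c = (\<chi> i j. if i = k \<and> j = l then c else 0)"

lemma sum_delta_l: "(\<Sum>m\<in>UNIV. (if m = (j::'n::finite) then x else 0) * f m) = x * (f j :: 'a::comm_ring_1)"
proof -
  have "(\<Sum>m\<in>UNIV. (if m = j then x else 0) * f m) = (\<Sum>m\<in>UNIV. if m = j then x * f m else 0)"
    by (rule sum.cong) auto
  then show ?thesis by simp
qed

lemma sum_delta_r: "(\<Sum>m\<in>UNIV. f m * (if m = (j::'n::finite) then x else 0)) = (f j :: 'a::comm_ring_1) * x"
proof -
  have "(\<Sum>m\<in>UNIV. f m * (if m = j then x else 0)) = (\<Sum>m\<in>UNIV. if m = j then f m * x else 0)"
    by (rule sum.cong) auto
  then show ?thesis by simp
qed

lemma emat_mult_l: "(emat k l c ** X) $ i $ j = (if i = k then c * X$l$j else 0)"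
proof (cases "i = k")
  case True
  have "(emat k l c ** X) $ i $ j = (\<Sum>m\<in>UNIV. (if m = l then c else 0) * X$m$j)"
    by (simp add: matrix_matrix_mult_def emat_def True)
  then show ?thesis using True by (simp only: sum_delta_l) simp
next
  case False then show ?thesis by (simp add: matrix_matrix_mult_def emat_def)
qed

lemma emat_mult_r: "(X ** emat k l c) $ i $ j = (if j = l then X$i$k * c else 0)"
proof (cases "j = l")
  case True
  have "(X ** emat k l c) $ i $ j = (\<Sum>m\<in>UNIV. X$i$m * (if m = k then c else 0))"
    by (simp add: matrix_matrix_mult_def emat_def True)
  then show ?thesis using True by (simp only: sum_delta_r) simp
next
  case False then show ?thesis by (simp add: matrix_matrix_mult_def emat_def)
qed

lemma emat_nz: "c \<noteq> 0 \<Longrightarrow> emat k l c \<noteq> 0"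
  by (auto simp: emat_def vec_eq_iff)

definition smat :: "'a::comm_ring_1 \<Rightarrow> 'a^'n::finite^'n" where
  "smat c = (\<chi> i j. if i = j then c else 0)"

lemma smat_mult_l: "(smat c ** X) $ i $ j = c * X$i$j"
proof -
  have "(smat c ** X) $ i $ j = (\<Sum>m\<in>UNIV. (if m = i then c else 0) * X$m$j)"
    by (simp add: matrix_matrix_mult_def smat_def eq_commute)
  then show ?thesis by (simp only: sum_delta_l)
qed

lemma smat_mult_r: "(X ** smat c) $ i $ j = X$i$j * c"
proof -
  have "(X ** smat c) $ i $ j = (\<Sum>m\<in>UNIV. X$i$m * (if m = j then c else 0))"
    by (simp add: matrix_matrix_mult_def smat_def)
  then show ?thesis by (simp only: sum_delta_r)
qed

lemma smat_nz: "c \<noteq> 0 \<Longrightarrow> smat c \<noteq> (0::'a::comm_ring_1^'n::finite^'n)"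
  by (auto simp: smat_def vec_eq_iff)


lemma vertex_det:
  fixes w :: "'a::comm_ring_1^'n::finite^'n"
  assumes "w \<in> orth_vertices"
  shows "\<exists>y. y \<noteq> 0 \<and> det w * y = 0"
proof -
  obtain Y :: "'a^'n^'n" where Y: "Y \<noteq> 0" "w ** Y = 0" using assms unfolding orth_vertices_def by blast
  have "(adj0 w ** w) ** Y = adj0 w ** (w ** Y)" by (simp only: matrix_mul_assoc)
  also have "\<dots> = 0" using Y(2) by (simp add: matrix_matrix_mult_def vec_eq_iff)
  finally have z: "(adj0 w ** w) ** Y = 0" .
  have eq: "((adj0 w ** w) ** Y) $ i $ j = det w * Y$i$j" for i j
  proof -
    have "((adj0 w ** w) ** Y) $ i $ j = (\<Sum>k\<in>UNIV. (adj0 w ** w) $ i $ k * Y$k$j)"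
      by (simp only: matrix_matrix_mult_def vec_lambda_beta)
    also have "\<dots> = (\<Sum>k\<in>UNIV. (if k = i then det w else 0) * Y$k$j)"
      by (rule sum.cong[OF refl]) (simp add: A2)
    also have "\<dots> = det w * Y$i$j" by (rule sum_delta_l)
    finally show ?thesis .
  qed
  have "\<forall>i j. det w * Y$i$j = 0"
  proof (intro allI)
    fix i j show "det w * Y$i$j = 0" using eq[of i j] unfolding z by simp
  qed
  moreover obtain i j where "Y$i$j \<noteq> 0" using Y(1) by (auto simp: vec_eq_iff)
  ultimately show ?thesis by blast
qed



lemma emat_nth: "emat k l c $ i $ j = (if i = k \<and> j = l then c else 0)"
  by (simp add: emat_def)

lemma two_idx: "CARD('n::finite) > 1 \<Longrightarrow> \<exists>i1 i2::'n. i1 \<noteq> i2"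
  using card_le_Suc0_iff_eq[of "UNIV::'n set"] by auto

lemma vertex_nz: "w \<in> orth_vertices \<Longrightarrow> w \<noteq> 0"
  by (simp add: orth_vertices_def)

lemma ecc_ge2:
  fixes v :: "'a::comm_ring_1^'n::finite^'n"
  assumes v: "v \<in> orth_vertices" and i12: "i1 \<noteq> (i2::'n)"
  shows "2 \<le> orth_ecc v"
proof -
  have "v \<noteq> 0" using v by (rule vertex_nz)
  then obtain k l where kl: "v$k$l \<noteq> 0" by (auto simp: vec_eq_iff)
  define oth where "oth m = (if m = i1 then i2 else i1)" for m
  have oth: "oth m \<noteq> m" for m using i12 by (auto simp: oth_def)
  have vert: "(emat l m 1 :: 'a^'n^'n) \<in> orth_vertices" for m
  proof -
    have "emat l m 1 ** (emat (oth m) (oth m) 1 :: 'a^'n^'n) = 0"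
      using oth[of m] by (simp add: vec_eq_iff emat_mult_l emat_nth)
    moreover have "(emat (oth l) (oth l) 1 :: 'a^'n^'n) ** emat l m 1 = 0"
      using oth[of l] by (simp add: vec_eq_iff emat_mult_l emat_nth)
    moreover have "(emat l m 1 :: 'a^'n^'n) \<noteq> 0" "(emat (oth m) (oth m) 1 :: 'a^'n^'n) \<noteq> 0"
      "(emat (oth l) (oth l) 1 :: 'a^'n^'n) \<noteq> 0" by (simp_all add: emat_nz)
    ultimately show ?thesis unfolding orth_vertices_def by blast
  qed
  have nadj: "v ** (emat l m 1 :: 'a^'n^'n) \<noteq> 0" for m
  proof
    assume "v ** (emat l m 1 :: 'a^'n^'n) = 0"
    then have "(v ** (emat l m 1 :: 'a^'n^'n)) $ k $ m = 0" by simp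
    then show False using kl by (simp add: emat_mult_r)
  qed
  have "(emat l i1 1 :: 'a^'n^'n) \<noteq> emat l i2 1"
  proof
    assume "(emat l i1 1 :: 'a^'n^'n) = emat l i2 1"
    then have "(emat l i1 1 :: 'a^'n^'n) $ l $ i1 = emat l i2 1 $ l $ i1" by simp
    then show False using i12 by (simp add: emat_nth)
  qed
  then obtain m where m: "(emat l m 1 :: 'a^'n^'n) \<noteq> v" by metis
  have "\<forall>k<2. \<not> orth_walk v (emat l m 1) k"
  proof (intro allI impI)
    fix k :: nat assume "k < 2"
    then have "k = 0 \<or> k = Suc 0" by auto
    then show "\<not> orth_walk v (emat l m 1) k"
      using m nadj[of m] walk_0D[of v "emat l m 1"] walk_1D[of v "emat l m 1"]
      by (auto simp: orth_adj_def)
  qed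
  then have "enat 2 \<le> orth_dist v (emat l m 1)" by (rule dist_ge)
  then show ?thesis using vert[of m] ecc_ge by (metis enat_numeral)
qed

lemma ecc_E_le3:
  fixes i1 i2 :: "'n::finite"
  assumes nz: "z0 \<noteq> (0::'a::comm_ring_1)" "w0 \<noteq> 0" "z0 * w0 = 0" and i12: "i1 \<noteq> i2"
  shows "orth_ecc (emat i1 i1 (1::'a) :: 'a^'n^'n) \<le> 3"
proof (rule ecc_le)
  fix w :: "'a^'n^'n" assume w: "w \<in> orth_vertices"
  obtain y0 where y0: "y0 \<noteq> 0" "det w * y0 = 0" using vertex_det[OF w] by blast
  define b where "b = (if det w \<noteq> 0 then det w else z0)"
  define t0 where "t0 = (if det w \<noteq> 0 then y0 else w0)"
  have b: "b \<noteq> 0" "b * t0 = 0" "t0 \<noteq> 0" "t0 * det w = 0"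
    using nz y0 by (auto simp: b_def t0_def mult.commute)
  obtain U :: "'a^'n^'n" where U: "U \<noteq> 0" "w ** U = 0" "U ** w = 0" "\<And>i j. b * U$i$j = 0"
    using GL[OF b(3) b(2) b(4)] by blast
  define E :: "'a^'n^'n" where "E = emat i1 i1 1"
  define B :: "'a^'n^'n" where "B = emat i2 i2 b"
  have s1: "\<exists>k\<le>1. orth_walk E B k"
    by (rule walk_step) (use i12 b in \<open>simp_all add: E_def B_def emat_nz vec_eq_iff emat_mult_l emat_nth\<close>)
  have "B ** U = 0" using U by (simp add: B_def vec_eq_iff emat_mult_l)
  moreover have "U ** B = 0" using U by (simp add: B_def vec_eq_iff emat_mult_r mult.commute)
  moreover have "B \<noteq> 0" using b by (simp add: B_def emat_nz)
  ultimately have s2: "\<exists>k\<le>1. orth_walk B U k"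
    using U by (intro walk_step) auto
  have s3: "\<exists>k\<le>1. orth_walk U w k"
    by (rule walk_step) (use U vertex_nz[OF w] in auto)
  have "\<exists>k\<le>1+1+1. orth_walk E w k"
    by (rule walk_cat_le[OF walk_cat_le[OF s1 s2] s3])
  then obtain k where k: "k \<le> 1+1+1" "orth_walk E w k" by blast
  from k(1) have "k \<le> 3" by simp
  with k(2) have "\<exists>k\<le>3. orth_walk E w k" by blast
  then have "orth_dist E w \<le> enat 3" by (rule dist_le)
  then show "orth_dist (emat i1 i1 1) w \<le> 3" by (simp add: E_def enat_numeral)
qed

lemma E_vertex:
  fixes i1 i2 :: "'n::finite"
  assumes i12: "i1 \<noteq> i2"
  shows "(emat i1 i1 (1::'a::comm_ring_1) :: 'a^'n^'n) \<in> orth_vertices"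
  by (rule vert_of_ann(1)[where y="emat i2 i2 1"])
     (use i12 in \<open>simp_all add: emat_nz vec_eq_iff emat_mult_l emat_nth\<close>)



lemma smat_nth: "smat c $ i $ j = (if i = j then c else 0)"
  by (simp add: smat_def)

lemma zd_iff: "a \<in> zero_divisors \<longleftrightarrow> (\<exists>b. b \<noteq> 0 \<and> a * b = 0)"
  by (simp add: zero_divisors_def)

lemma ann_nz:
  assumes "Ann c \<inter> Ann a \<noteq> {0}"
  shows "\<exists>x. x \<noteq> 0 \<and> c * x = 0 \<and> a * x = 0"
proof (rule ccontr)
  assume "\<not> ?thesis"
  then have "Ann c \<inter> Ann a = {0}" by (auto simp: Ann_def)
  with assms show False by simp
qed

lemma smat_vertex_ecc:
  fixes c :: "'a::comm_ring_1"
  assumes c: "c \<noteq> 0" and cond: "\<forall>a\<in>zero_divisors. Ann c \<inter> Ann a \<noteq> {0}"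
  shows "(smat c :: 'a^'n::finite^'n) \<in> orth_vertices" "orth_ecc (smat c :: 'a^'n^'n) \<le> 2"
proof -
  have z0: "(0::'a) \<in> zero_divisors" unfolding zd_iff by (rule exI[of _ 1]) simp
  have "Ann c \<inter> Ann 0 \<noteq> {0}" using cond z0 by blast
  then obtain s where s: "s \<noteq> 0" "c * s = 0" using ann_nz[of c 0] by blast
  have p1: "(smat c :: 'a^'n^'n) ** (smat s :: 'a^'n^'n) = 0" using s by (simp add: vec_eq_iff smat_mult_l smat_nth)
  have p2: "(smat s :: 'a^'n^'n) ** (smat c :: 'a^'n^'n) = 0" using s by (simp add: vec_eq_iff smat_mult_r smat_nth mult.commute)
  have n1: "(smat c :: 'a^'n^'n) \<noteq> 0" using c by (rule smat_nz)
  have n2: "(smat s :: 'a^'n^'n) \<noteq> 0" using s(1) by (rule smat_nz)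
  show "(smat c :: 'a^'n::finite^'n) \<in> orth_vertices" by (rule vert_of_ann(1)[OF n1 n2 p1 p2])
  show "orth_ecc (smat c :: 'a^'n^'n) \<le> 2"
  proof (rule ecc_le)
    fix w :: "'a^'n^'n" assume w: "w \<in> orth_vertices"
    have "det w \<in> zero_divisors" using vertex_det[OF w] unfolding zd_iff .
    then have "Ann c \<inter> Ann (det w) \<noteq> {0}" using cond by blast
    then obtain x where x: "x \<noteq> 0" "c * x = 0" "det w * x = 0" using ann_nz[of c "det w"] by blast
    have x3: "x * det w = 0" using x(3) by (simp add: mult.commute)
    obtain U :: "'a^'n^'n" where U: "U \<noteq> 0" "w ** U = 0" "U ** w = 0" "\<And>i j. c * U$i$j = 0"
      using GL[OF x(1) x(2) x3] by blast
    have q1: "(smat c :: 'a^'n^'n) ** U = 0" using U by (simp add: vec_eq_iff smat_mult_l)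
    have q2: "U ** (smat c :: 'a^'n^'n) = 0" using U by (simp add: vec_eq_iff smat_mult_r mult.commute)
    have s1: "\<exists>k\<le>1. orth_walk (smat c :: 'a^'n^'n) U k"
      by (rule walk_step[OF n1 U(1) q1 q2])
    have s2: "\<exists>k\<le>1. orth_walk U w k"
      by (rule walk_step[OF U(1) vertex_nz[OF w] U(3) U(2)])
    have "\<exists>k\<le>1+1. orth_walk (smat c :: 'a^'n^'n) w k" by (rule walk_cat_le[OF s1 s2])
    then obtain k where k: "k \<le> 1+1" "orth_walk (smat c :: 'a^'n^'n) w k" by blast
    from k(1) have "k \<le> 2" by simp
    with k(2) have "\<exists>k\<le>2. orth_walk (smat c :: 'a^'n^'n) w k" by blast
    then have "orth_dist (smat c :: 'a^'n^'n) w \<le> enat 2" by (rule dist_le)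
    then show "orth_dist (smat c :: 'a^'n^'n) w \<le> 2" by (simp add: enat_numeral)
  qed
qed

definition tmat :: "'n::finite \<Rightarrow> 'n \<Rightarrow> 'a::comm_ring_1 \<Rightarrow> 'a^'n^'n" where
  "tmat q j a = (\<chi> i k. if i = q then (if k = j then 1 else 0) else if i = j then (if k = q then a else 0) else (if k = i then 1 else 0))"

lemma tmat_l:
  assumes qj: "q \<noteq> j"
  shows "(tmat q j a ** U) $ i $ k = (if i = q then U$j$k else if i = j then a * U$q$k else U$i$k)"
proof -
  have e: "(tmat q j a ** U) $ i $ k = (\<Sum>m\<in>UNIV. tmat q j a $ i $ m * U$m$k)"
    by (simp add: matrix_matrix_mult_def)
  show ?thesis
  proof (cases "i = q")
    case True
    have "(\<Sum>m\<in>UNIV. tmat q j a $ i $ m * U$m$k) = (\<Sum>m\<in>UNIV. (if m = j then 1 else 0) * U$m$k)"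
      by (rule sum.cong) (auto simp: tmat_def True)
    then show ?thesis using True e by (simp only: sum_delta_l) simp
  next
    case F1: False
    show ?thesis
    proof (cases "i = j")
      case True
      have "(\<Sum>m\<in>UNIV. tmat q j a $ i $ m * U$m$k) = (\<Sum>m\<in>UNIV. (if m = q then a else 0) * U$m$k)"
        by (rule sum.cong) (use qj in \<open>auto simp: tmat_def True\<close>)
      then show ?thesis using True F1 e by (simp only: sum_delta_l) simp
    next
      case False
      have "(\<Sum>m\<in>UNIV. tmat q j a $ i $ m * U$m$k) = (\<Sum>m\<in>UNIV. (if m = i then 1 else 0) * U$m$k)"
        by (rule sum.cong) (use F1 False in \<open>auto simp: tmat_def\<close>)
      then show ?thesis using False F1 e by (simp only: sum_delta_l) simp
    qed
  qed
qed

lemma tmat_r: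
  assumes qj: "q \<noteq> j"
  shows "(U ** tmat q j a) $ i $ k = (if k = j then U$i$q else if k = q then U$i$j * a else U$i$k)"
proof -
  have e: "(U ** tmat q j a) $ i $ k = (\<Sum>m\<in>UNIV. U$i$m * tmat q j a $ m $ k)"
    by (simp add: matrix_matrix_mult_def)
  show ?thesis
  proof (cases "k = j")
    case True
    have "(\<Sum>m\<in>UNIV. U$i$m * tmat q j a $ m $ k) = (\<Sum>m\<in>UNIV. U$i$m * (if m = q then 1 else 0))"
      by (rule sum.cong) (use qj in \<open>auto simp: tmat_def True\<close>)
    then show ?thesis using True e by (simp only: sum_delta_r) simp
  next
    case F1: False
    show ?thesis
    proof (cases "k = q")
      case True
      have "(\<Sum>m\<in>UNIV. U$i$m * tmat q j a $ m $ k) = (\<Sum>m\<in>UNIV. U$i$m * (if m = j then a else 0))"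
        by (rule sum.cong) (use qj in \<open>auto simp: tmat_def True\<close>)
      then show ?thesis using True F1 e by (simp only: sum_delta_r) simp
    next
      case False
      have "(\<Sum>m\<in>UNIV. U$i$m * tmat q j a $ m $ k) = (\<Sum>m\<in>UNIV. U$i$m * (if m = k then 1 else 0))"
        by (rule sum.cong) (use F1 False in \<open>auto simp: tmat_def\<close>)
      then show ?thesis using False F1 e by (simp only: sum_delta_r) simp
    qed
  qed
qed

lemma tmat_nb:
  fixes U :: "'a::comm_ring_1^'n::finite^'n"
  assumes qj: "q \<noteq> j" and l: "tmat q j a ** U = 0" and r: "U ** tmat q j a = 0"
  shows "\<And>i k. i \<noteq> q \<or> k \<noteq> j \<Longrightarrow> U$i$k = 0" "a * U$q$j = 0"
proof -
  have L: "\<And>i k. (tmat q j a ** U) $ i $ k = 0" using l by simp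
  have R: "\<And>i k. (U ** tmat q j a) $ i $ k = 0" using r by simp
  show "a * U$q$j = 0" using L[of j j] qj by (simp add: tmat_l[OF qj])
  fix i k assume ik: "i \<noteq> q \<or> k \<noteq> j"
  show "U$i$k = 0"
  proof (cases "i = q")
    case True
    with ik have kj: "k \<noteq> j" by simp
    show ?thesis
    proof (cases "k = q")
      case True
      then show ?thesis using R[of i j] \<open>i = q\<close> by (simp add: tmat_r[OF qj])
    next
      case False
      then show ?thesis using R[of i k] kj by (simp add: tmat_r[OF qj])
    qed
  next
    case False
    show ?thesis
    proof (cases "i = j")
      case True
      then show ?thesis using L[of q k] by (simp add: tmat_l[OF qj])
    next
      case F2: False
      then show ?thesis using L[of i k] False by (simp add: tmat_l[OF qj])
    qed
  qed
qed


lemma ecc_ge3: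
  fixes v :: "'a::comm_ring_1^'n::finite^'n"
  assumes ncond: "\<not> (\<exists>c::'a. c \<noteq> 0 \<and> (\<forall>a\<in>zero_divisors. Ann c \<inter> Ann a \<noteq> {0}))"
    and v: "v \<in> orth_vertices" and i12: "i1 \<noteq> (i2::'n)"
  shows "3 \<le> orth_ecc v"
proof -
  have "v \<noteq> 0" using v by (rule vertex_nz)
  then obtain p q where pq: "v$p$q \<noteq> 0" by (auto simp: vec_eq_iff)
  define c where "c = v$p$q"
  obtain a where a: "a \<in> zero_divisors" "Ann c \<inter> Ann a = {0}" using ncond pq c_def by blast
  have key: "\<And>x. c * x = 0 \<Longrightarrow> a * x = 0 \<Longrightarrow> x = 0"
  proof -
    fix x assume "c * x = 0" "a * x = 0"
    then have "x \<in> Ann c \<inter> Ann a" by (simp add: Ann_def)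
    then show "x = 0" using a(2) by blast
  qed
  obtain s where s: "s \<noteq> 0" "a * s = 0" using a(1) by (auto simp: zd_iff)
  define j where "j = (if q = i1 then i2 else i1)"
  have qj: "q \<noteq> j" using i12 by (auto simp: j_def)
  define T :: "'a^'n^'n" where "T = tmat q j a"
  have T_vert: "T \<in> orth_vertices"
  proof -
    have e1: "T ** emat q j s = 0" using qj s by (simp add: T_def vec_eq_iff tmat_l emat_nth)
    have e2: "emat q j s ** T = 0" using qj s by (simp add: T_def vec_eq_iff tmat_r emat_nth mult.commute)
    have e3: "T \<noteq> 0"
    proof
      assume "T = 0"
      then have "T $ q $ j = 0" by simp
      then show False by (simp add: T_def tmat_def)
    qed
    have e4: "(emat q j s :: 'a^'n^'n) \<noteq> 0" using s by (simp add: emat_nz)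
    show ?thesis by (rule vert_of_ann(1)[OF e3 e4 e1 e2])
  qed
  have "\<forall>k<3. \<not> orth_walk v T k"
  proof (intro allI impI)
    fix k :: nat assume "k < 3"
    then have "k = 0 \<or> k = Suc 0 \<or> k = 2" by auto
    then show "\<not> orth_walk v T k"
    proof (elim disjE)
      assume k: "k = 0"
      show ?thesis
      proof
        assume "orth_walk v T k"
        then have "v = T" using k walk_0D by blast
        then have "T $ p $ q = c" by (simp add: c_def)
        then show False
        proof (cases "p = q")
          case True
          then show False using \<open>T $ p $ q = c\<close> pq qj by (simp add: T_def tmat_def c_def)
        next
          case F: False
          show False
          proof (cases "p = j")
            case True
            then have "c = a" using \<open>T $ p $ q = c\<close> F by (simp add: T_def tmat_def)
            then show False using key s by (metis)
          next
            case False
            then show False using \<open>T $ p $ q = c\<close> F pq by (simp add: T_def tmat_def c_def)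
          qed
        qed
      qed
    next
      assume k: "k = Suc 0"
      show ?thesis
      proof
        assume "orth_walk v T k"
        then have "orth_adj v T" using k walk_1D by blast
        then have "T ** v = 0" "v ** T = 0" by (auto simp: orth_adj_def)
        then have "v$p$q = 0" using tmat_nb(1)[OF qj, of a v p q] qj by (simp add: T_def)
        then show False using pq by simp
      qed
    next
      assume k: "k = 2"
      show ?thesis
      proof
        assume "orth_walk v T k"
        then obtain u where u: "orth_adj v u" "orth_adj u T" using k walk_2D by blast
        then have uv: "u \<in> orth_vertices" "v ** u = 0" and uT: "T ** u = 0" "u ** T = 0"
          by (auto simp: orth_adj_def)
        have supp: "\<And>i k. i \<noteq> q \<or> k \<noteq> j \<Longrightarrow> u$i$k = 0" and au: "a * u$q$j = 0"
          using tmat_nb[OF qj, of a u] uT by (auto simp: T_def)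
        have "u$q$j \<noteq> 0"
        proof
          assume u0: "u$q$j = 0"
          have "u$i$k = 0" for i k
          proof (cases "i = q \<and> k = j")
            case True then show ?thesis using u0 by simp
          next
            case False then show ?thesis by (intro supp) auto
          qed
          then have "u = 0" by (simp add: vec_eq_iff)
          then show False using vertex_nz[OF uv(1)] by simp
        qed
        have "(v ** u) $ p $ j = (\<Sum>m\<in>UNIV. v$p$m * u$m$j)"
          by (simp add: matrix_matrix_mult_def)
        also have "\<dots> = (\<Sum>m\<in>UNIV. v$p$m * (if m = q then u$q$j else 0))"
          by (rule sum.cong) (use supp in auto)
        also have "\<dots> = c * u$q$j" by (simp only: sum_delta_r c_def)
        finally have "c * u$q$j = 0" using uv(2) by simp
        then show False using key au \<open>u$q$j \<noteq> 0\<close> by blast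
      qed
    qed
  qed
  then have "enat 3 \<le> orth_dist v T" by (rule dist_ge)
  then show ?thesis using T_vert ecc_ge by (metis enat_numeral)
qed



lemma enat23: "2 \<le> (r::enat) \<Longrightarrow> r \<le> 3 \<Longrightarrow> r = 2 \<or> r = 3"
  by (cases r) (auto simp: numeral_eq_enat)

theorem theorem2:
  assumes "(zero_divisors :: 'a::comm_ring_1 set) \<noteq> {0}"
    and "CARD('n::finite) > 1"
  defines "r \<equiv> orth_radius TYPE('a) TYPE('n)"
  shows "(2 \<le> r \<and> r \<le> 4)
    \<and> ((\<forall>a0\<in>(zero_divisors :: 'a set). \<exists>a1 a2. a1 \<noteq> 0 \<and> a2 \<noteq> 0 \<and>
            (let a = [a0, a1, a2] in \<forall>i<3. \<forall>j<3. i \<noteq> j \<longrightarrow> a ! i * a ! j = 0))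
         \<longrightarrow> r \<in> {2, 3})
    \<and> (r = 2 \<longleftrightarrow> (\<exists>c::'a. c \<noteq> 0 \<and> (\<forall>a\<in>zero_divisors. Ann c \<inter> Ann a \<noteq> {0})))"
proof -
  obtain i1 i2 :: 'n where i12: "i1 \<noteq> i2" using two_idx[OF assms(2)] by blast
  have "\<exists>z\<in>(zero_divisors::'a set). z \<noteq> 0"
  proof (rule ccontr)
    assume "\<not> ?thesis"
    then have h: "\<And>z. z \<in> (zero_divisors::'a set) \<Longrightarrow> z = 0" by blast
    have "(0::'a) \<in> zero_divisors" unfolding zd_iff by (rule exI[of _ 1]) simp
    then have "(zero_divisors :: 'a set) = {0}" using h by (intro set_eqI iffI) auto
    with assms(1) show False by simp
  qed
  then obtain z0 :: 'a where "z0 \<in> zero_divisors" "z0 \<noteq> 0" by blast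
  then obtain w0 :: 'a where zw: "z0 \<noteq> 0" "w0 \<noteq> 0" "z0 * w0 = 0"
    unfolding zd_iff by blast
  have ge2: "2 \<le> r"
    unfolding r_def orth_radius_def by (rule INF_greatest) (rule ecc_ge2[OF _ i12])
  have E: "(emat i1 i1 1 :: 'a^'n^'n) \<in> orth_vertices" by (rule E_vertex[OF i12])
  have le3: "r \<le> 3"
    unfolding r_def orth_radius_def by (rule INF_lower2[where f=orth_ecc, OF E ecc_E_le3[OF zw i12]])
  have p1: "2 \<le> r \<and> r \<le> 4"
  proof -
    have "(3::enat) \<le> 4" by (simp add: numeral_eq_enat)
    then show ?thesis using ge2 le3 order_trans by blast
  qed
  have p2: "r \<in> {2, 3}" using enat23[OF ge2 le3] by simp
  have p3: "r = 2 \<longleftrightarrow> (\<exists>c::'a. c \<noteq> 0 \<and> (\<forall>a\<in>zero_divisors. Ann c \<inter> Ann a \<noteq> {0}))"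
  proof
    assume r2: "r = 2"
    show "\<exists>c::'a. c \<noteq> 0 \<and> (\<forall>a\<in>zero_divisors. Ann c \<inter> Ann a \<noteq> {0})"
    proof (rule ccontr)
      assume nc: "\<not> ?thesis"
      have "3 \<le> r"
        unfolding r_def orth_radius_def by (rule INF_greatest) (rule ecc_ge3[OF nc _ i12])
      with r2 show False by (simp add: numeral_eq_enat)
    qed
  next
    assume "\<exists>c::'a. c \<noteq> 0 \<and> (\<forall>a\<in>zero_divisors. Ann c \<inter> Ann a \<noteq> {0})"
    then obtain c :: 'a where c: "c \<noteq> 0" "\<forall>a\<in>zero_divisors. Ann c \<inter> Ann a \<noteq> {0}" by blast
    have "r \<le> 2"
      unfolding r_def orth_radius_def
      by (rule INF_lower2[where f=orth_ecc, OF smat_vertex_ecc(1)[OF c] smat_vertex_ecc(2)[OF c]])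
    with ge2 show "r = 2" by simp
  qed
  show ?thesis using p1 p2 p3 by blast
qed


end
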